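(* Let $A$ be a valuation domain in which every non-zero prime ideal is branched, and let $E$ be an $A$-module. The following are equivalent: (1) $aE=a^2E$ for each $a\in A$; (2) for each prime ideal $L$ of $A$, $LE/L'E$ is a divisible $A/L'$-module, where $L'$ denotes the union of all prime ideals properly contained in $L$.
   Context: In a valuation domain, a non-zero prime ideal $L$ is branched if it is not the union of the prime ideals properly contained in it. An $A/L'$-module $M$ is divisible if $sM=M$ for every $s\in A\setminus L'$. *)

theory Defs
  imports Complex_Main
begin

text \<open>Ideals of a commutative ring, given as type-class algebra (the ring is the whole type).\<close>
definition is_ideal :: "'a::comm_ring_1 set \<Rightarrow> bool" where
  "is_ideal I \<longleftrightarrow> 0 \<in> I \<and> (\<forall>x\<in>I. \<forall>y\<in>I. x + y \<in> I) \<and> (\<forall>r. \<forall>x\<in>I. r * x \<in> I)"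

definition prime_ideal :: "'a::comm_ring_1 set \<Rightarrow> bool" where
  "prime_ideal P \<longleftrightarrow> is_ideal P \<and> P \<noteq> UNIV \<and> (\<forall>a b. a * b \<in> P \<longrightarrow> a \<in> P \<or> b \<in> P)"

definition valuation_domain :: "'a::idom itself \<Rightarrow> bool" where
  "valuation_domain _ \<longleftrightarrow> (\<forall>a b :: 'a. a dvd b \<or> b dvd a)"

definition lower_prime :: "'a::comm_ring_1 set \<Rightarrow> 'a set" where
  "lower_prime L = \<Union>{P. prime_ideal P \<and> P \<subset> L}"

definition branched :: "'a::comm_ring_1 set \<Rightarrow> bool" where
  "branched L \<longleftrightarrow> L \<noteq> lower_prime L"

definition ideal_times_module ::
  "('a::comm_ring_1 \<Rightarrow> 'b::ab_group_add \<Rightarrow> 'b) \<Rightarrow> 'a set \<Rightarrow> 'b set" where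
  "ideal_times_module scale I = module.span scale {scale i x | i x. i \<in> I}"

text \<open>The A/L'-module LE/L'E is divisible: s (LE/L'E) = LE/L'E for every s not in L'.
  Unfolded on representatives: every y in LE is congruent modulo L'E to s z with z in LE.\<close>
definition divisible_quotient ::
  "('a::comm_ring_1 \<Rightarrow> 'b::ab_group_add \<Rightarrow> 'b) \<Rightarrow> 'a set \<Rightarrow> bool" where
  "divisible_quotient scale L \<longleftrightarrow>
     (\<forall>s. s \<notin> lower_prime L \<longrightarrow>
        (\<forall>y \<in> ideal_times_module scale L. \<exists>z \<in> ideal_times_module scale L.
            scale s z - y \<in> ideal_times_module scale (lower_prime L)))"

end

theory Submission
  imports Defs
begin

lemma ideal_dvd:
  fixes x y :: "'a::comm_ring_1"
  assumes "is_ideal I" "x \<in> I" "x dvd y" shows "y \<in> I"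
proof -
  obtain k where "y = x * k" using assms(3) by (auto elim: dvdE)
  then show ?thesis using assms(1,2) unfolding is_ideal_def by (metis mult.commute)
qed

lemma prime_pow:
  fixes b :: "'a::comm_ring_1"
  assumes "prime_ideal L" "b ^ n \<in> L" "n \<ge> 1" shows "b \<in> L"
  using assms(2,3)
proof (induction n)
  case 0 then show ?case by simp
next
  case (Suc n)
  show ?case
  proof (cases "n = 0")
    case True then show ?thesis using Suc by simp
  next
    case False
    have "b * b ^ n \<in> L" using Suc.prems by simp
    then have "b \<in> L \<or> b ^ n \<in> L" using assms(1) unfolding prime_ideal_def by blast
    then show ?thesis using Suc.IH False by auto
  qed
qed

lemma rad_prime:
  fixes s :: "'a::idom"
  assumes val: "\<forall>a b :: 'a. a dvd b \<or> b dvd a" and nu: "\<not> s dvd 1"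
  shows "prime_ideal {b. \<exists>n\<ge>1. s dvd b ^ n}"
proof -
  let ?P = "{b. \<exists>n\<ge>1. s dvd b ^ n}"
  have add: "b + c \<in> ?P" if bc: "b \<in> ?P" "c \<in> ?P" "b dvd c" for b c
  proof -
    obtain n where n: "n \<ge> 1" "s dvd b ^ n" using bc(1) by blast
    obtain d where d: "c = b * d" using bc(3) by (auto elim: dvdE)
    have "b + c = b * (1 + d)" by (simp add: d distrib_left)
    then have "(b + c) ^ n = b ^ n * (1 + d) ^ n" by (simp add: power_mult_distrib)
    then have "s dvd (b + c) ^ n" using n(2) by simp
    then show ?thesis using n(1) by auto
  qed
  have mul: "a * b \<in> ?P \<Longrightarrow> a dvd b \<Longrightarrow> b \<in> ?P" for a b
  proof -
    assume "a * b \<in> ?P" "a dvd b"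
    then obtain n where n: "n \<ge> 1" "s dvd (a * b) ^ n" by auto
    obtain c where c: "b = a * c" using \<open>a dvd b\<close> by (auto elim: dvdE)
    have bn: "b ^ n = a ^ n * c ^ n" by (simp add: c power_mult_distrib)
    have "b ^ (2 * n) = b ^ n * b ^ n" by (simp add: mult_2 power_add)
    also have "\<dots> = (a * b) ^ n * c ^ n" by (subst (2) bn) (simp add: power_mult_distrib ac_simps)
    finally have "b ^ (2 * n) = (a * b) ^ n * c ^ n" .
    then have "s dvd b ^ (2 * n)" using n(2) by simp
    then show "b \<in> ?P" using n(1) by (intro CollectI exI[of _ "2*n"]) auto
  qed
  have "is_ideal ?P"
    unfolding is_ideal_def
  proof (intro conjI ballI allI)
    show "0 \<in> ?P" by (auto intro: exI[of _ 1])
  next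
    fix x y assume "x \<in> ?P" "y \<in> ?P"
    then show "x + y \<in> ?P" using val add[of x y] add[of y x] by (metis add.commute)
  next
    fix r x assume "x \<in> ?P"
    then obtain n where n: "n \<ge> 1" "s dvd x ^ n" by auto
    then have "s dvd (r * x) ^ n" by (simp add: power_mult_distrib)
    then show "r * x \<in> ?P" using n(1) by auto
  qed
  moreover have "1 \<notin> ?P" using nu by auto
  moreover have "a \<in> ?P \<or> b \<in> ?P" if "a * b \<in> ?P" for a b
    using val mul[of a b] mul[of b a] that by (metis mult.commute)
  ultimately show ?thesis unfolding prime_ideal_def by blast
qed

lemma ideal_not_unit:
  fixes s :: "'a::comm_ring_1"
  assumes "prime_ideal L" "s \<in> L" shows "\<not> s dvd 1"
proof
  assume "s dvd 1"
  then have "\<forall>r. r \<in> L" using assms ideal_dvd[of L s] unfolding prime_ideal_def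
    by (meson dvd_trans one_dvd one_dvd)
  then show False using assms(1) unfolding prime_ideal_def by auto
qed

lemma range_subspace:
  assumes "module scale"
  shows "module.subspace scale (range (scale c))"
proof -
  interpret module scale by fact
  show ?thesis
  proof (rule subspaceI)
    show "0 \<in> range (scale c)" using rangeI[of "scale c" 0] by simp
    show "x + y \<in> range (scale c)" if xy: "x \<in> range (scale c)" "y \<in> range (scale c)" for x y
    proof -
      obtain x' y' where "x = scale c x'" "y = scale c y'" using xy by blast
      then have "x + y = scale c (x' + y')" by (simp add: scale_right_distrib)
      then show ?thesis by blast
    qed
    show "scale r x \<in> range (scale c)" if xy: "x \<in> range (scale c)" for r x
    proof -
      obtain x' where "x = scale c x'" using xy by blast
      then have "scale r x = scale c (scale r x')" by (simp add: mult.commute)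
      then show ?thesis by blast
    qed
  qed
qed

theorem proposition2p6:
  fixes scale :: "'a::idom \<Rightarrow> 'b::ab_group_add \<Rightarrow> 'b"
  assumes "valuation_domain TYPE('a)"
    and "\<And>L :: 'a set. prime_ideal L \<Longrightarrow> L \<noteq> {0} \<Longrightarrow> branched L"
    and "module scale"
  shows "(\<forall>a :: 'a. range (scale a) = range (scale (a ^ 2)))
     \<longleftrightarrow> (\<forall>L :: 'a set. prime_ideal L \<longrightarrow> divisible_quotient scale L)"
proof -
  interpret module scale by fact
  have val: "\<forall>a b :: 'a. a dvd b \<or> b dvd a" using assms(1) unfolding valuation_domain_def by blast
  show ?thesis
  proof
    assume H: "\<forall>a :: 'a. range (scale a) = range (scale (a ^ 2))"
    have pw: "range (scale a) \<subseteq> range (scale (a ^ Suc k))" for a k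
    proof (induction k)
      case 0 then show ?case by simp
    next
      case (Suc k)
      show ?case
      proof
        fix y assume "y \<in> range (scale a)"
        then obtain x where x: "y = scale (a ^ Suc k) x" using Suc by auto
        have "scale a x \<in> range (scale (a ^ 2))" using H by blast
        then obtain u where "scale a x = scale (a^2) u" by auto
        then have "y = scale (a ^ k) (scale (a ^ 2) u)" using x
          by (metis power_Suc2 scale_scale)
        also have "\<dots> = scale (a ^ Suc (Suc k)) u" by (simp add: power2_eq_square algebra_simps)
        finally show "y \<in> range (scale (a ^ Suc (Suc k)))" by auto
      qed
    qed
    show "\<forall>L :: 'a set. prime_ideal L \<longrightarrow> divisible_quotient scale L"
    proof (intro allI impI)
      fix L :: "'a set" assume L: "prime_ideal L"
      have LI: "is_ideal L" using L unfolding prime_ideal_def by blast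
      let ?LE = "ideal_times_module scale L"
      show "divisible_quotient scale L"
        unfolding divisible_quotient_def
      proof (intro allI impI ballI)
        fix s y assume s: "s \<notin> lower_prime L" and y: "y \<in> ?LE"
        let ?S = "scale s ` ?LE"
        have sub: "subspace ?S"
        proof (rule subspaceI)
          have "scale s 0 \<in> ?S" using span_zero unfolding ideal_times_module_def
            by (intro imageI) 
          then show "0 \<in> ?S" by simp
          show "u + v \<in> ?S" if uv: "u \<in> ?S" "v \<in> ?S" for u v
          proof -
            obtain u' v' where "u' \<in> ?LE" "v' \<in> ?LE" "u = scale s u'" "v = scale s v'"
              using uv by blast
            then have "u + v = scale s (u' + v')" "u' + v' \<in> ?LE"
              unfolding ideal_times_module_def by (simp_all add: scale_right_distrib span_add)
            then show ?thesis by (rule image_eqI)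
          qed
          show "scale c u \<in> ?S" if uv: "u \<in> ?S" for c u
          proof -
            obtain u' where "u' \<in> ?LE" "u = scale s u'"
              using uv by blast
            then have "scale c u = scale s (scale c u')" "scale c u' \<in> ?LE"
              unfolding ideal_times_module_def by (simp_all add: mult.commute span_scale)
            then show ?thesis by (rule image_eqI)
          qed
        qed
        have gen: "{scale i x | i x. i \<in> L} \<subseteq> ?S"
        proof clarify
          fix l x assume l: "l \<in> L"
          have base: "scale c (scale l x') \<in> ?LE" for c x'
          proof -
            have "scale l x' \<in> {scale i x | i x. i \<in> L}" using l by blast
            then show ?thesis unfolding ideal_times_module_def by (intro span_scale span_base)
          qed
          show "scale l x \<in> ?S"
          proof (cases "s \<in> L")
            case False
            have "\<not> l dvd s" using ideal_dvd[OF LI l] False by blast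
            then have "s dvd l" using val by blast
            then obtain t where t: "l = s * t" by (auto elim: dvdE)
            then have "t \<in> L" using L l False unfolding prime_ideal_def by blast
            then have "scale t x \<in> ?LE" unfolding ideal_times_module_def
              by (auto intro!: span_base)
            moreover have "scale l x = scale s (scale t x)" using t by simp
            ultimately show ?thesis by blast
          next
            case True
            have "\<exists>n\<ge>1. s dvd l ^ n"
            proof (rule ccontr)
              assume nn: "\<not> (\<exists>n\<ge>1. s dvd l ^ n)"
              let ?P = "{b. \<exists>n\<ge>1. s dvd b ^ n}"
              have "prime_ideal ?P" using rad_prime[OF val ideal_not_unit[OF L True]] .
              moreover have "?P \<subseteq> L"
              proof
                fix b assume "b \<in> ?P"
                then obtain n where "n \<ge> 1" "s dvd b ^ n" by auto
                then show "b \<in> L" using prime_pow[OF L] ideal_dvd[OF LI True] by blast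
              qed
              moreover have "l \<notin> ?P" using nn by blast
              ultimately have "?P \<in> {P. prime_ideal P \<and> P \<subset> L}" using l by blast
              moreover have "s \<in> ?P" by (auto intro: exI[of _ 1])
              ultimately show False using s unfolding lower_prime_def by blast
            qed
            then obtain n where n1: "n \<ge> 1" "s dvd l ^ n" by blast
            then obtain c where "l ^ n = s * c" by (auto elim: dvdE)
            with n1 have n: "n \<ge> 1" "l ^ n = s * c" by auto
            have "scale l x \<in> range (scale (l ^ Suc n))" using pw by blast
            then obtain x' where "scale l x = scale (l ^ Suc n) x'" by auto
            also have "\<dots> = scale s (scale c (scale l x'))"
              using n(2) by (simp add: algebra_simps)
            finally show ?thesis using base by blast
          qed
        qed
        have "?LE \<subseteq> ?S" unfolding ideal_times_module_def
          using span_minimal[OF gen] sub unfolding ideal_times_module_def by blast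
        then obtain z where "z \<in> ?LE" "y = scale s z" using y by blast
        then show "\<exists>z\<in>?LE. scale s z - y \<in> ideal_times_module scale (lower_prime L)"
          using span_zero unfolding ideal_times_module_def by (intro bexI[of _ z]) auto
      qed
    qed
  next
    assume H: "\<forall>L :: 'a set. prime_ideal L \<longrightarrow> divisible_quotient scale L"
    show "\<forall>a :: 'a. range (scale a) = range (scale (a ^ 2))"
    proof
      fix a :: 'a
      have sup: "range (scale (a ^ 2)) \<subseteq> range (scale a)"
        by (auto simp: power2_eq_square simp flip: scale_scale)
      have "range (scale a) \<subseteq> range (scale (a ^ 2))"
      proof (cases "a dvd 1")
        case True
        then obtain b where b: "1 = a * b" by (auto elim: dvdE)
        show ?thesis
        proof clarify
          fix x
          have "scale a x = scale (a^2) (scale b x)"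
            by (simp add: power2_eq_square algebra_simps flip: b)
          then show "scale a x \<in> range (scale (a^2))" by (metis rangeI)
        qed
      next
        case False
        define L where "L = {b. \<exists>n\<ge>1. a dvd b ^ n}"
        have L: "prime_ideal L" unfolding L_def using rad_prime[OF val False] .
        have aL: "a \<in> L" unfolding L_def by (auto intro: exI[of _ 1])
        have aL': "a \<notin> lower_prime L"
        proof
          assume "a \<in> lower_prime L"
          then obtain Q where Q: "prime_ideal Q" "Q \<subset> L" "a \<in> Q"
            unfolding lower_prime_def by blast
          have "L \<subseteq> Q"
          proof
            fix b assume "b \<in> L"
            then obtain n where "n \<ge> 1" "a dvd b ^ n" unfolding L_def by auto
            then show "b \<in> Q" using prime_pow[OF Q(1)] ideal_dvd[of Q a] Q
              unfolding prime_ideal_def by blast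
          qed
          then show False using Q by blast
        qed
        have L'E: "ideal_times_module scale (lower_prime L) \<subseteq> range (scale (a ^ 2))"
          unfolding ideal_times_module_def
        proof (rule span_minimal[OF _ range_subspace[OF assms(3)]], clarify)
          fix m u assume "m \<in> lower_prime L"
          then obtain Q where Q: "prime_ideal Q" "Q \<subset> L" "m \<in> Q"
            unfolding lower_prime_def by blast
          have "a \<notin> Q" using Q aL' unfolding lower_prime_def by blast
          then have "a ^ 2 \<notin> Q" using prime_pow[OF Q(1), of a 2] by auto
          then have "\<not> m dvd a ^ 2" using ideal_dvd[of Q m] Q unfolding prime_ideal_def by blast
          then have "a ^ 2 dvd m" using val by blast
          then obtain t where "m = a ^ 2 * t" by (auto elim: dvdE)
          then have "scale m u = scale (a ^ 2) (scale t u)" by simp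
          then show "scale m u \<in> range (scale (a ^ 2))" by (metis rangeI)
        qed
        have D: "divisible_quotient scale L" using H L by blast
        show ?thesis
        proof clarify
          fix x
          have "scale a x \<in> ideal_times_module scale L"
            unfolding ideal_times_module_def using aL by (auto intro!: span_base)
          then obtain z where z: "z \<in> ideal_times_module scale L"
              "scale a z - scale a x \<in> ideal_times_module scale (lower_prime L)"
            using D aL' unfolding divisible_quotient_def by blast
          then obtain z2 where z2: "scale a z2 - z \<in> ideal_times_module scale (lower_prime L)"
            using D aL' unfolding divisible_quotient_def by blast
          obtain w1 where w1: "scale a z - scale a x = scale (a^2) w1" using z(2) L'E by blast
          obtain w2 where w2: "scale a z2 - z = scale (a^2) w2" using z2 L'E by blast
          have "z = scale a z2 - scale (a^2) w2" using w2 by (simp add: algebra_simps)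
          have ax: "scale a x = scale a z - scale (a^2) w1"
            using w1 by (simp add: algebra_simps)
          have "scale a z = scale a (scale a z2) - scale a (scale (a^2) w2)"
            by (subst \<open>z = _\<close>) (rule scale_right_diff_distrib)
          also have "\<dots> = scale (a^2) z2 - scale (a^2) (scale a w2)"
            by (simp add: power2_eq_square mult.commute)
          finally have "scale a x = scale (a^2) z2 - scale (a^2) (scale a w2) - scale (a^2) w1"
            using ax by simp
          also have "\<dots> = scale (a^2) (z2 - scale a w2 - w1)"
            by (simp only: scale_right_diff_distrib)
          finally show "scale a x \<in> range (scale (a^2))" by (metis rangeI)
        qed
      qed
      then show "range (scale a) = range (scale (a ^ 2))" using sup by blast
    qed
  qed
qed

end
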